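(* Let $J'\subseteq J$ be nonempty, $t_o\in[0,T-\sum_{j\in J'}p_j]$, and let $\alpha$, $c_1<\dots<c_m$, $M$ and $B_\alpha$ be as in the context. Let $1\le q<m$ and let $t_\alpha\in[c_q,c_{q+1})$ with $t_\alpha\in[t_o,t_e-p_\alpha]$ and $t_\alpha\notin B_\alpha$. Let $j,k\in J'\setminus\{\alpha\}$ with $M(j)\le q<M(k)$. Then for every partial schedule of $J'$ starting at $t_o$ in which $\alpha$ starts at time $t_\alpha$, job $j$ is processed before $\alpha$ and job $k$ is processed after $\alpha$, no relation of the dominance rule between $\alpha$ and $j$, between $\alpha$ and $k$, or between $j$ and $k$ is violated (regardless of the start times of $j$ and $k$).
   Context: $J$ is a finite set of jobs; job $j$ has processing time $p_j>0$ and weight $w_j>0$; $T=\sum_{j\in J}p_j$. For $J'\subseteq J$ and $t_o\ge0$, a partial schedule of $J'$ starting at $t_o$ is an ordering of $J'$ processed consecutively without idle time from time $t_o$; job $j$ has (absolute) start time $t_j$. For $t\ge 0$, $\varphi_j(t)=\frac{w_j}{p_j(p_j+t)}$. For jobs $i,j$ with $w_ip_j\neq w_jp_i$, $t^*_{ij}=\frac{w_jp_i^2-w_ip_j^2}{w_ip_j-w_jp_i}$ (the unique real $t$ with $\varphi_i(t)=\varphi_j(t)$). Dominance rule: for an interval $I\subseteq[0,\infty)$, the relation "$i$ dominates $j$ on $I$" is violated by a (partial) schedule if $j$ is processed before $i$ and both $t_j\in I$ and $t_i-p_j\in I$. The rule contains, for each pair of distinct jobs $i,j$ with $(p_i,w_i)\ne(p_j,w_j)$: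 (1) if $\varphi_i(t)\ge\varphi_j(t)$ for all $t\ge 0$, "$i$ dominates $j$ on $[0,\infty)$"; (2) otherwise, if $\varphi_j(t)\ge\varphi_i(t)$ for all $t\ge0$, "$j$ dominates $i$ on $[0,\infty)$"; (3) otherwise, labelling the pair so that $\varphi_i(0)>\varphi_j(0)$, $t^*_{ij}>0$ is defined and the rule contains "$i$ dominates $j$ on $[0,t^*_{ij})$" and "$j$ dominates $i$ on $[t^*_{ij},\infty)$". Banned set: for $i\in J$, $B_i$ is the union over all $j\in J\setminus\{i\}$ with $\varphi_i(0)>\varphi_j(0)$, $w_ip_j\ne w_jp_i$ and $t^*_{ij}\in(0,T)$ of the intervals $[t^*_{ij},t^*_{ij}+p_j)$. Subproblem data: $t_e=t_o+\sum_{j\in J'}p_j$; $\alpha\in J'$ maximizes $\varphi_i(t_o)$ over $i\in J'$, ties broken in favour of maximum $\varphi_i(t_e)$; for $j\in J'\setminus\{\alpha\}$ with $t^*_{\alpha j}$ defined, $c_{\alpha j}=t^*_{\alpha j}+p_j$; $C=\{c_{\alpha j}: j\in J'\setminus\{\alpha\},\ t^*_{\alpha j}\text{ defined},\ c_{\alpha j}\in(t_o,t_e)\}\cup\{t_o,t_e\}$ with distinct elements $t_o=c_1<\dots<c_m=t_e$; $M(\alpha)=1$, and for $j\neq\alpha$, $M(j)=r$ if $t^*_{\alpha j}$ is defined, $t^*_{\alpha j}\in(t_o,t_e)$ and $c_{\alpha j}=c_r$ for some $r\le m$, and $M(j)=|J'|+1$ otherwise. *)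

theory Defs
  imports Main "HOL.Real"
begin

(* Jobs have type 'a; p, w :: 'a => real are processing times and weights. *)

definition phi :: "('a \<Rightarrow> real) \<Rightarrow> ('a \<Rightarrow> real) \<Rightarrow> 'a \<Rightarrow> real \<Rightarrow> real" where
  "phi p w j t = w j / (p j * (p j + t))"

definition tstar_defined :: "('a \<Rightarrow> real) \<Rightarrow> ('a \<Rightarrow> real) \<Rightarrow> 'a \<Rightarrow> 'a \<Rightarrow> bool" where
  "tstar_defined p w i j \<longleftrightarrow> w i * p j \<noteq> w j * p i"

definition tstar :: "('a \<Rightarrow> real) \<Rightarrow> ('a \<Rightarrow> real) \<Rightarrow> 'a \<Rightarrow> 'a \<Rightarrow> real" where
  "tstar p w i j = (w j * (p i)^2 - w i * (p j)^2) / (w i * p j - w j * p i)"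

definition dominates ::
  "'a set \<Rightarrow> ('a \<Rightarrow> real) \<Rightarrow> ('a \<Rightarrow> real) \<Rightarrow> 'a \<Rightarrow> 'a \<Rightarrow> real set \<Rightarrow> bool" where
  "dominates J p w i j I \<longleftrightarrow>
     i \<in> J \<and> j \<in> J \<and> i \<noteq> j \<and> (p i, w i) \<noteq> (p j, w j) \<and>
     ( ((\<forall>t\<ge>0. phi p w j t \<le> phi p w i t) \<and> I = {0..})
     \<or> (\<not> (\<forall>t\<ge>0. phi p w j t \<le> phi p w i t) \<and> \<not> (\<forall>t\<ge>0. phi p w i t \<le> phi p w j t) \<and>
          phi p w i 0 > phi p w j 0 \<and> I = {0..<tstar p w i j})
     \<or> (\<not> (\<forall>t\<ge>0. phi p w j t \<le> phi p w i t) \<and> \<not> (\<forall>t\<ge>0. phi p w i t \<le> phi p w j t) \<and>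
          phi p w j 0 > phi p w i 0 \<and> I = {tstar p w j i..}))"

definition is_partial_schedule :: "'a set \<Rightarrow> 'a list \<Rightarrow> bool" where
  "is_partial_schedule J' \<sigma> \<longleftrightarrow> distinct \<sigma> \<and> set \<sigma> = J'"

definition start_time :: "('a \<Rightarrow> real) \<Rightarrow> 'a list \<Rightarrow> real \<Rightarrow> 'a \<Rightarrow> real" where
  "start_time p \<sigma> to j = to + sum_list (map p (takeWhile (\<lambda>x. x \<noteq> j) \<sigma>))"

definition before :: "'a list \<Rightarrow> 'a \<Rightarrow> 'a \<Rightarrow> bool" where
  "before \<sigma> a b \<longleftrightarrow> (\<exists>xs ys. \<sigma> = xs @ b # ys \<and> a \<in> set xs)"

definition violates :: "('a \<Rightarrow> real) \<Rightarrow> 'a list \<Rightarrow> real \<Rightarrow> 'a \<Rightarrow> 'a \<Rightarrow> real set \<Rightarrow> bool" where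
  "violates p \<sigma> to i j I \<longleftrightarrow>
     before \<sigma> j i \<and> start_time p \<sigma> to j \<in> I \<and> start_time p \<sigma> to i - p j \<in> I"

definition banned :: "'a set \<Rightarrow> ('a \<Rightarrow> real) \<Rightarrow> ('a \<Rightarrow> real) \<Rightarrow> 'a \<Rightarrow> real set" where
  "banned J p w i = (\<Union>j \<in> {j \<in> J - {i}. phi p w i 0 > phi p w j 0 \<and> tstar_defined p w i j \<and>
                                   tstar p w i j \<in> {0<..<sum p J}}.
                       {tstar p w i j ..< tstar p w i j + p j})"

definition t_end :: "('a \<Rightarrow> real) \<Rightarrow> 'a set \<Rightarrow> real \<Rightarrow> real" where
  "t_end p J' to = to + sum p J'"

definition is_alpha :: "('a \<Rightarrow> real) \<Rightarrow> ('a \<Rightarrow> real) \<Rightarrow> 'a set \<Rightarrow> real \<Rightarrow> 'a \<Rightarrow> bool" where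
  "is_alpha p w J' to \<alpha> \<longleftrightarrow> \<alpha> \<in> J' \<and> (\<forall>i\<in>J'. phi p w i to \<le> phi p w \<alpha> to) \<and>
     (\<forall>i\<in>J'. phi p w i to = phi p w \<alpha> to \<longrightarrow> phi p w i (t_end p J' to) \<le> phi p w \<alpha> (t_end p J' to))"

definition Cset :: "('a \<Rightarrow> real) \<Rightarrow> ('a \<Rightarrow> real) \<Rightarrow> 'a set \<Rightarrow> real \<Rightarrow> 'a \<Rightarrow> real set" where
  "Cset p w J' to \<alpha> =
     {tstar p w \<alpha> j + p j | j. j \<in> J' - {\<alpha>} \<and> tstar_defined p w \<alpha> j \<and>
        tstar p w \<alpha> j + p j \<in> {to<..<t_end p J' to}} \<union> {to, t_end p J' to}"

text \<open>m = number of distinct elements of C, and c r (1 <= r <= m) the r-th smallest.\<close>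
definition mC :: "('a \<Rightarrow> real) \<Rightarrow> ('a \<Rightarrow> real) \<Rightarrow> 'a set \<Rightarrow> real \<Rightarrow> 'a \<Rightarrow> nat" where
  "mC p w J' to \<alpha> = card (Cset p w J' to \<alpha>)"

definition cseq :: "('a \<Rightarrow> real) \<Rightarrow> ('a \<Rightarrow> real) \<Rightarrow> 'a set \<Rightarrow> real \<Rightarrow> 'a \<Rightarrow> nat \<Rightarrow> real" where
  "cseq p w J' to \<alpha> r = sorted_list_of_set (Cset p w J' to \<alpha>) ! (r - 1)"

definition Mfun :: "('a \<Rightarrow> real) \<Rightarrow> ('a \<Rightarrow> real) \<Rightarrow> 'a set \<Rightarrow> real \<Rightarrow> 'a \<Rightarrow> 'a \<Rightarrow> nat" where
  "Mfun p w J' to \<alpha> j =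
     (if j = \<alpha> then 1
      else if tstar_defined p w \<alpha> j \<and> tstar p w \<alpha> j \<in> {to<..<t_end p J' to} \<and>
              (\<exists>r. 1 \<le> r \<and> r \<le> mC p w J' to \<alpha> \<and> tstar p w \<alpha> j + p j = cseq p w J' to \<alpha> r)
      then (THE r. 1 \<le> r \<and> r \<le> mC p w J' to \<alpha> \<and> tstar p w \<alpha> j + p j = cseq p w J' to \<alpha> r)
      else card J' + 1)"

end

theory Submission
  imports Defs
begin

definition LL :: "('a \<Rightarrow> real) \<Rightarrow> ('a \<Rightarrow> real) \<Rightarrow> 'a \<Rightarrow> 'a \<Rightarrow> real \<Rightarrow> real" where
  "LL p w a b t = w a * p b * (p b + t) - w b * p a * (p a + t)"

lemma phi_le_iff:
  assumes "p a > 0" "p b > 0" "t \<ge> 0"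
  shows "phi p w b t \<le> phi p w a t \<longleftrightarrow> 0 \<le> LL p w a b t"
proof -
  have "p a * (p a + t) > 0" "p b * (p b + t) > 0" using assms by auto
  then show ?thesis unfolding phi_def LL_def by (simp add: divide_simps mult.commute mult.left_commute)
qed

lemma phi_less_iff:
  assumes "p a > 0" "p b > 0" "t \<ge> 0"
  shows "phi p w b t < phi p w a t \<longleftrightarrow> 0 < LL p w a b t"
proof -
  have "p a * (p a + t) > 0" "p b * (p b + t) > 0" using assms by auto
  then show ?thesis unfolding phi_def LL_def by (simp add: divide_simps mult.commute mult.left_commute)
qed

lemma LL_swap: "LL p w b a t = - LL p w a b t"
  unfolding LL_def by simp

lemma LL_lin: "LL p w a b t = LL p w a b 0 + (w a * p b - w b * p a) * t"
  unfolding LL_def by (simp add: algebra_simps)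

lemma LL_tstar: "w a * p b - w b * p a \<noteq> 0 \<Longrightarrow>
   LL p w a b t = (w a * p b - w b * p a) * (t - tstar p w a b)"
  unfolding LL_def tstar_def by (simp add: field_simps power2_eq_square)

lemma tstar_sym: "tstar p w a b = tstar p w b a"
  unfolding tstar_def by (simp add: field_simps) (smt (verit) minus_divide_divide)

lemma LL_two_zero:
  assumes "p a > 0" "p b > 0" "w a > 0" "w b > 0"
    "LL p w a b t1 = 0" "LL p w a b t2 = 0" "t1 \<noteq> t2"
  shows "p a = p b \<and> w a = w b"
proof -
  let ?B = "w a * p b - w b * p a"
  have e1: "LL p w a b 0 + ?B * t1 = 0" "LL p w a b 0 + ?B * t2 = 0"
    using assms LL_lin[of p w a b] by metis+
  have "?B * (t1 - t2) = 0" using e1 by (simp add: algebra_simps)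
  then have B: "?B = 0" using assms(7) by simp
  then have L0: "LL p w a b 0 = 0" using e1 by simp
  have "w a * p b = w b * p a" using B by simp
  have "p b * (w b * p a) = p a * (w b * p a)"
    using L0 B unfolding LL_def by (simp add: algebra_simps)
  then have "p b = p a" using assms by simp
  then show ?thesis using B assms by simp
qed

lemma dom_cases:
  assumes d: "dominates J p w a b I" and pos: "p a > 0" "p b > 0" "w a > 0" "w b > 0"
  shows "(I = {0..} \<and> (\<forall>t\<ge>0. phi p w b t \<le> phi p w a t)) \<or>
        (\<exists>s>0. I = {0..<s} \<and> (\<forall>t. 0 \<le> t \<and> t < s \<longrightarrow> phi p w b t < phi p w a t)) \<or>
        (\<exists>s>0. I = {s..} \<and> s = tstar p w a b \<and> w a * p b - w b * p a > 0 \<and>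
            (\<forall>t. 0 \<le> t \<and> t < s \<longrightarrow> phi p w a t < phi p w b t) \<and>
            (\<forall>t\<ge>s. phi p w b t \<le> phi p w a t))"
proof -
  let ?B = "w a * p b - w b * p a"
  let ?L = "LL p w a b"
  have le: "\<And>t. t \<ge> 0 \<Longrightarrow> phi p w b t \<le> phi p w a t \<longleftrightarrow> 0 \<le> ?L t"
    using phi_le_iff pos by metis
  have lt: "\<And>t. t \<ge> 0 \<Longrightarrow> phi p w b t < phi p w a t \<longleftrightarrow> 0 < ?L t"
    using phi_less_iff pos by metis
  have le': "\<And>t. t \<ge> 0 \<Longrightarrow> phi p w a t \<le> phi p w b t \<longleftrightarrow> ?L t \<le> 0"
    using phi_le_iff[of p b a] pos LL_swap[of p w b a] by (metis neg_0_le_iff_le)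
  have lt': "\<And>t. t \<ge> 0 \<Longrightarrow> phi p w a t < phi p w b t \<longleftrightarrow> ?L t < 0"
    using phi_less_iff[of p b a] pos LL_swap[of p w b a] by (metis neg_0_less_iff_less)
  have lin: "\<And>t. ?L t = ?L 0 + ?B * t" using LL_lin by metis
  from d have cs: "(\<forall>t\<ge>0. phi p w b t \<le> phi p w a t) \<and> I = {0..}
     \<or> (\<not> (\<forall>t\<ge>0. phi p w b t \<le> phi p w a t) \<and> \<not> (\<forall>t\<ge>0. phi p w a t \<le> phi p w b t) \<and>
          phi p w a 0 > phi p w b 0 \<and> I = {0..<tstar p w a b})
     \<or> (\<not> (\<forall>t\<ge>0. phi p w b t \<le> phi p w a t) \<and> \<not> (\<forall>t\<ge>0. phi p w a t \<le> phi p w b t) \<and>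
          phi p w b 0 > phi p w a 0 \<and> I = {tstar p w b a..})"
    unfolding dominates_def by blast
  then show ?thesis
  proof (elim disjE conjE)
    assume "\<forall>t\<ge>0. phi p w b t \<le> phi p w a t" "I = {0..}" then show ?thesis by blast
  next
    assume n1: "\<not> (\<forall>t\<ge>0. phi p w b t \<le> phi p w a t)" and n2: "\<not> (\<forall>t\<ge>0. phi p w a t \<le> phi p w b t)"
      and g: "phi p w a 0 > phi p w b 0" and I: "I = {0..<tstar p w a b}"
    have L0: "?L 0 > 0" using g lt by simp
    have "\<not> ?B \<ge> 0"
    proof
      assume "?B \<ge> 0"
      then have "\<forall>t\<ge>0. 0 \<le> ?L t" using L0 lin by (metis add_nonneg_nonneg less_imp_le mult_nonneg_nonneg)
      then show False using n1 le by blast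
    qed
    then have B: "?B < 0" by simp
    have Ls: "\<And>t. ?L t = ?B * (t - tstar p w a b)" using LL_tstar B by (metis less_irrefl)
    have "0 < ?B * (0 - tstar p w a b)" using Ls[of 0] L0 by simp
    then have spos: "tstar p w a b > 0" using B by (smt (verit) mult_nonpos_nonneg)
    have "\<forall>t. 0 \<le> t \<and> t < tstar p w a b \<longrightarrow> phi p w b t < phi p w a t"
    proof (intro allI impI)
      fix t assume "0 \<le> t \<and> t < tstar p w a b"
      then show "phi p w b t < phi p w a t" using lt Ls B by (simp add: mult_neg_neg)
    qed
    then show ?thesis using I spos by blast
  next
    assume n1: "\<not> (\<forall>t\<ge>0. phi p w b t \<le> phi p w a t)" and n2: "\<not> (\<forall>t\<ge>0. phi p w a t \<le> phi p w b t)"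
      and g: "phi p w b 0 > phi p w a 0" and I: "I = {tstar p w b a..}"
    have L0: "?L 0 < 0" using g lt' by simp
    have "\<not> ?B \<le> 0"
    proof
      assume "?B \<le> 0"
      then have "\<forall>t\<ge>0. ?L t \<le> 0" using L0 lin
        by (metis add_nonpos_nonpos less_imp_le mult_nonpos_nonneg)
      then show False using n2 le' by blast
    qed
    then have B: "?B > 0" by simp
    have Ls: "\<And>t. ?L t = ?B * (t - tstar p w a b)" using LL_tstar B by (metis less_irrefl)
    have "?B * (0 - tstar p w a b) < 0" using Ls[of 0] L0 by simp
    then have spos: "tstar p w a b > 0" using B by (smt (verit) mult_nonneg_nonneg)
    have A1: "\<forall>t. 0 \<le> t \<and> t < tstar p w a b \<longrightarrow> phi p w a t < phi p w b t"
    proof (intro allI impI)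
      fix t assume "0 \<le> t \<and> t < tstar p w a b"
      then show "phi p w a t < phi p w b t" using lt' Ls B by (simp add: mult_pos_neg)
    qed
    have A2: "\<forall>t\<ge>tstar p w a b. phi p w b t \<le> phi p w a t"
    proof (intro allI impI)
      fix t assume "tstar p w a b \<le> t"
      then show "phi p w b t \<le> phi p w a t" using le Ls B spos by simp
    qed
    show ?thesis using I spos A1 A2 B tstar_sym[of p w a b] by auto
  qed
qed

lemma start_before:
  assumes "distinct \<sigma>" "\<forall>x\<in>set \<sigma>. p x \<ge> 0" "before \<sigma> a b"
  shows "start_time p \<sigma> to a + p a \<le> start_time p \<sigma> to b"
proof -
  obtain xs ys where s: "\<sigma> = xs @ b # ys" and a: "a \<in> set xs" using assms(3) unfolding before_def by blast
  obtain us vs where xs: "xs = us @ a # vs" using a split_list by metis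
  have bn: "b \<notin> set xs" using assms(1) s by simp
  have an: "a \<notin> set us" using assms(1) s xs by simp
  have "\<forall>x\<in>set xs. x \<noteq> b" using bn by blast
  then have tb: "takeWhile (\<lambda>x. x \<noteq> b) \<sigma> = xs" using s by (simp add: takeWhile_append2)
  have "\<forall>x\<in>set us. x \<noteq> a" using an by blast
  then have ta: "takeWhile (\<lambda>x. x \<noteq> a) \<sigma> = us" using s xs by (simp add: takeWhile_append2)
  have "sum_list (map p vs) \<ge> 0" using assms(2) s xs by (intro sum_list_nonneg) auto
  then show ?thesis unfolding start_time_def tb ta xs by simp
qed

lemma start_ge:
  assumes "\<forall>x\<in>set \<sigma>. p x \<ge> 0"
  shows "start_time p \<sigma> to a \<ge> to"
proof -
  have "sum_list (map p (takeWhile (\<lambda>x. x \<noteq> a) \<sigma>)) \<ge> 0"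
    using assms by (intro sum_list_nonneg) (auto dest: set_takeWhileD)
  then show ?thesis unfolding start_time_def by simp
qed

lemma sl_mono:
  fixes S :: "real set"
  assumes "finite S" "1 \<le> r" "r \<le> r'" "r' \<le> card S"
  shows "sorted_list_of_set S ! (r - 1) \<le> sorted_list_of_set S ! (r' - 1)"
  using assms by (intro sorted_nth_mono) (auto simp: sorted_sorted_list_of_set length_sorted_list_of_set)

lemma sl_in:
  fixes S :: "real set"
  assumes "finite S" "c \<in> S"
  shows "\<exists>r. 1 \<le> r \<and> r \<le> card S \<and> sorted_list_of_set S ! (r - 1) = c"
proof -
  have "c \<in> set (sorted_list_of_set S)" using assms by (simp add: set_sorted_list_of_set)
  then obtain i where "i < length (sorted_list_of_set S)" "sorted_list_of_set S ! i = c"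
    by (metis in_set_conv_nth)
  then show ?thesis by (intro exI[of _ "Suc i"]) (auto simp: length_sorted_list_of_set assms)
qed

lemma sl_inj:
  fixes S :: "real set"
  assumes "finite S" "1 \<le> r" "r \<le> card S" "1 \<le> r'" "r' \<le> card S"
    "sorted_list_of_set S ! (r - 1) = sorted_list_of_set S ! (r' - 1)"
  shows "r = r'"
proof -
  have "distinct (sorted_list_of_set S)" by (simp add: distinct_sorted_list_of_set)
  then have "r - 1 = r' - 1" using assms nth_eq_iff_index_eq
    by (metis diff_less length_sorted_list_of_set less_le_trans zero_less_one)
  then show ?thesis using assms by simp
qed

lemma Cset_sub: "Cset p w J' to \<alpha> \<subseteq> (\<lambda>j. tstar p w \<alpha> j + p j) ` (J' - {\<alpha>}) \<union> {to, t_end p J' to}"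
  unfolding Cset_def by blast

lemma Cset_finite: "finite J' \<Longrightarrow> finite (Cset p w J' to \<alpha>)"
  by (rule finite_subset[OF Cset_sub]) auto

lemma Cset_card: assumes "finite J'" "\<alpha> \<in> J'" shows "card (Cset p w J' to \<alpha>) \<le> card J' + 1"
proof -
  have "card (Cset p w J' to \<alpha>) \<le> card ((\<lambda>j. tstar p w \<alpha> j + p j) ` (J' - {\<alpha>}) \<union> {to, t_end p J' to})"
    using assms by (intro card_mono Cset_sub) auto
  also have "\<dots> \<le> card ((\<lambda>j. tstar p w \<alpha> j + p j) ` (J' - {\<alpha>})) + card {to, t_end p J' to}"
    by (rule card_Un_le)
  also have "\<dots> \<le> card (J' - {\<alpha>}) + 2"
    by (intro add_mono card_image_le) (auto simp: assms card_insert_if)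
  also have "\<dots> = card J' + 1" using assms
    by (simp add: card_Diff_singleton) (metis Suc_pred card_gt_0_iff empty_iff)
  finally show ?thesis .
qed

theorem lemma7:
  fixes J J' :: "'a set" and p w :: "'a \<Rightarrow> real" and to t\<alpha> :: real
    and \<alpha> j k :: 'a and q :: nat and \<sigma> :: "'a list"
  assumes finJ: "finite J"
    and pos_p: "\<forall>i\<in>J. p i > 0" and pos_w: "\<forall>i\<in>J. w i > 0"
    and sub: "J' \<subseteq> J" and ne: "J' \<noteq> {}"
    and to_range: "0 \<le> to" "to \<le> sum p J - sum p J'"
    and alpha: "is_alpha p w J' to \<alpha>"
    and q: "1 \<le> q" "q < mC p w J' to \<alpha>"
    and ta_c: "cseq p w J' to \<alpha> q \<le> t\<alpha>" "t\<alpha> < cseq p w J' to \<alpha> (q + 1)"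
    and ta_range: "to \<le> t\<alpha>" "t\<alpha> \<le> t_end p J' to - p \<alpha>"
    and ta_nb: "t\<alpha> \<notin> banned J p w \<alpha>"
    and j: "j \<in> J' - {\<alpha>}" and k: "k \<in> J' - {\<alpha>}"
    and Mj: "Mfun p w J' to \<alpha> j \<le> q" and Mk: "q < Mfun p w J' to \<alpha> k"
    and sched: "is_partial_schedule J' \<sigma>"
    and start_a: "start_time p \<sigma> to \<alpha> = t\<alpha>"
    and j_before: "before \<sigma> j \<alpha>" and k_after: "before \<sigma> \<alpha> k"
  shows "\<forall>a\<in>{\<alpha>, j, k}. \<forall>b\<in>{\<alpha>, j, k}. \<forall>I.
           dominates J p w a b I \<longrightarrow> \<not> violates p \<sigma> to a b I"
proof -
  define te where "te = t_end p J' to"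
  define C where "C = Cset p w J' to \<alpha>"
  define sj where "sj = tstar p w \<alpha> j"
  define sk where "sk = tstar p w \<alpha> k"
  define Bj where "Bj = w \<alpha> * p j - w j * p \<alpha>"
  define Bk where "Bk = w \<alpha> * p k - w k * p \<alpha>"
  have finJ': "finite J'" using finJ sub finite_subset by blast
  have aJ': "\<alpha> \<in> J'" and F: "\<forall>i\<in>J'. phi p w i to \<le> phi p w \<alpha> to"
    and tie: "\<forall>i\<in>J'. phi p w i to = phi p w \<alpha> to \<longrightarrow> phi p w i te \<le> phi p w \<alpha> te"
    using alpha unfolding is_alpha_def te_def by auto
  have jJ: "j \<in> J" "j \<in> J'" "j \<noteq> \<alpha>" using j sub by auto
  have kJ: "k \<in> J" "k \<in> J'" "k \<noteq> \<alpha>" using k sub by auto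
  have aJ: "\<alpha> \<in> J" using aJ' sub by auto
  have pa: "p \<alpha> > 0" "w \<alpha> > 0" using aJ pos_p pos_w by auto
  have pj: "p j > 0" "w j > 0" using jJ pos_p pos_w by auto
  have pk: "p k > 0" "w k > 0" using kJ pos_p pos_w by auto
  have sumpos: "sum p J' > 0" using finJ' ne sub pos_p by (intro sum_pos) auto
  have te_gt: "to < te" unfolding te_def t_end_def using sumpos by simp
  have te_le: "te \<le> sum p J" unfolding te_def t_end_def using to_range by simp
  have finC: "finite C" unfolding C_def by (rule Cset_finite[OF finJ'])
  have cardC: "card C \<le> card J' + 1" unfolding C_def by (rule Cset_card[OF finJ' aJ'])
  have mC: "mC p w J' to \<alpha> = card C" unfolding mC_def C_def by simp
  have cs: "\<And>r. cseq p w J' to \<alpha> r = sorted_list_of_set C ! (r - 1)"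
    unfolding cseq_def C_def by simp
  have te_ta: "t\<alpha> < te" using ta_range(2) pa(1) unfolding te_def by linarith
  have to0: "0 \<le> to" using to_range(1) .
  have jcond: "tstar_defined p w \<alpha> j \<and> tstar p w \<alpha> j \<in> {to<..<t_end p J' to} \<and>
              (\<exists>r. 1 \<le> r \<and> r \<le> mC p w J' to \<alpha> \<and> tstar p w \<alpha> j + p j = cseq p w J' to \<alpha> r)"
  proof (rule ccontr)
    assume "\<not> ?thesis"
    then have "Mfun p w J' to \<alpha> j = card J' + 1" unfolding Mfun_def using jJ(3) by (simp only: if_False)
    then show False using Mj q cardC mC by simp
  qed
  then obtain r0 where r0: "1 \<le> r0" "r0 \<le> card C" "sj + p j = sorted_list_of_set C ! (r0 - 1)"
    using mC cs sj_def by auto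
  have "Mfun p w J' to \<alpha> j = r0"
    unfolding Mfun_def using jJ jcond
    apply simp
    apply (rule the_equality)
    using r0 mC cs sj_def sl_inj[OF finC] by auto
  then have "r0 \<le> q" using Mj by simp
  then have "sj + p j \<le> cseq p w J' to \<alpha> q" using r0 cs sl_mono[OF finC] q mC
    by (metis less_imp_le_nat order.trans)
  then have jc: "sj + p j \<le> t\<alpha>" using ta_c by simp
  have sj_gt: "to < sj" "sj < te" using jcond sj_def te_def by auto
  have Bj0: "Bj \<noteq> 0" using jcond unfolding tstar_defined_def Bj_def by simp
  have Lj: "\<And>t. LL p w \<alpha> j t = Bj * (t - sj)" using LL_tstar Bj0 unfolding Bj_def sj_def by metis
  have "0 \<le> LL p w \<alpha> j to" using F jJ phi_le_iff[of p \<alpha> j to w] pa pj to0 by simp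
  then have "Bj * (to - sj) \<ge> 0" using Lj by simp
  then have Bjn: "Bj < 0" using sj_gt Bj0 by (smt (verit) mult_pos_neg)
  have sj0: "0 < sj" using sj_gt to0 by linarith
  have J0: "phi p w j 0 < phi p w \<alpha> 0"
    using phi_less_iff[of p \<alpha> j 0 w] pa pj Lj[of 0] Bjn sj0 by (simp add: mult_neg_pos)
  have J1: "\<And>t. t > sj \<Longrightarrow> phi p w \<alpha> t < phi p w j t"
  proof -
    fix t assume "t > sj"
    then have "LL p w \<alpha> j t < 0" using Lj Bjn by (simp add: mult_neg_pos)
    then show "phi p w \<alpha> t < phi p w j t"
      using phi_less_iff[of p j \<alpha> t w] pa pj LL_swap[of p w j \<alpha> t] \<open>t > sj\<close> sj_gt to0 by simp
  qed
  have J1': "\<And>t. t \<ge> sj \<Longrightarrow> phi p w \<alpha> t \<le> phi p w j t"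
  proof -
    fix t assume "t \<ge> sj"
    then have "LL p w \<alpha> j t \<le> 0" using Lj Bjn by (simp add: mult_nonpos_nonneg)
    then show "phi p w \<alpha> t \<le> phi p w j t"
      using phi_le_iff[of p j \<alpha> t w] pa pj LL_swap[of p w j \<alpha> t] \<open>t \<ge> sj\<close> sj_gt to0 by simp
  qed
  have Fk: "0 \<le> LL p w \<alpha> k to" using F kJ phi_le_iff[of p \<alpha> k to w] pa pk to0 by simp
  have tieK: "LL p w \<alpha> k to = 0 \<Longrightarrow> 0 \<le> LL p w \<alpha> k te"
  proof -
    assume L0: "LL p w \<alpha> k to = 0"
    have "phi p w k to \<le> phi p w \<alpha> to" using phi_le_iff[of p \<alpha> k to w] pa pk to0 L0 by simp
    moreover have "phi p w \<alpha> to \<le> phi p w k to"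
      using phi_le_iff[of p k \<alpha> to w] pa pk to0 L0 LL_swap[of p w k \<alpha> to] by simp
    ultimately have "phi p w k te \<le> phi p w \<alpha> te" using tie kJ by auto
    then show ?thesis using phi_le_iff[of p \<alpha> k te w] pa pk to0 te_gt by simp
  qed
  have K2: "Bk < 0 \<Longrightarrow> t\<alpha> < sk"
  proof -
    assume Bkn: "Bk < 0"
    have Lk: "\<And>t. LL p w \<alpha> k t = Bk * (t - sk)" using LL_tstar Bkn unfolding Bk_def sk_def
      by (metis less_irrefl)
    have "to \<le> sk" using Fk Lk[of to] Bkn by (smt (verit) mult_neg_pos)
    moreover have "to \<noteq> sk"
    proof
      assume "to = sk"
      then have "0 \<le> LL p w \<alpha> k te" using tieK Lk by simp
      then show False using Lk[of te] Bkn te_gt \<open>to = sk\<close> by (smt (verit) mult_neg_pos)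
    qed
    ultimately have sk_gt: "to < sk" by simp
    show "t\<alpha> < sk"
    proof (rule ccontr)
      assume "\<not> t\<alpha> < sk"
      then have ske: "sk \<le> t\<alpha>" by simp
      have tc: "t\<alpha> < sk + p k"
      proof (cases "sk + p k < te")
        case False then show ?thesis using te_ta by simp
      next
        case True
        have tdk: "tstar_defined p w \<alpha> k" using Bkn unfolding tstar_defined_def Bk_def by simp
        have skr: "tstar p w \<alpha> k \<in> {to<..<t_end p J' to}" using sk_gt ske te_ta
          unfolding sk_def te_def by simp
        have ckr: "tstar p w \<alpha> k + p k \<in> {to<..<t_end p J' to}" using sk_gt True pk
          unfolding sk_def te_def by simp
        have "sk + p k \<in> C" unfolding C_def Cset_def sk_def
          apply (rule UnI1)
          apply (rule CollectI)
          apply (rule exI[of _ k])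
          using kJ tdk ckr by blast
        then obtain r where r: "1 \<le> r" "r \<le> card C" "sorted_list_of_set C ! (r - 1) = sk + p k"
          using sl_in[OF finC] by blast
        have ex: "\<exists>r. 1 \<le> r \<and> r \<le> mC p w J' to \<alpha> \<and> tstar p w \<alpha> k + p k = cseq p w J' to \<alpha> r"
          using r mC cs sk_def by metis
        have cond: "tstar_defined p w \<alpha> k \<and> tstar p w \<alpha> k \<in> {to<..<t_end p J' to} \<and>
            (\<exists>r. 1 \<le> r \<and> r \<le> mC p w J' to \<alpha> \<and> tstar p w \<alpha> k + p k = cseq p w J' to \<alpha> r)"
          using tdk skr ex by blast
        have "Mfun p w J' to \<alpha> k = r"
          unfolding Mfun_def if_not_P[OF kJ(3)] if_P[OF cond]
          apply (rule the_equality)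
          using r mC cs sk_def sl_inj[OF finC] by auto
        then have "q + 1 \<le> r" using Mk by simp
        then have "sorted_list_of_set C ! (q + 1 - 1) \<le> sorted_list_of_set C ! (r - 1)"
          using r by (intro sl_mono[OF finC]) simp_all
        then have "cseq p w J' to \<alpha> (q + 1) \<le> sk + p k" using cs[of "q+1"] r(3) by simp
        then show ?thesis using ta_c by simp
      qed
      have tdk: "tstar_defined p w \<alpha> k" using Bkn unfolding tstar_defined_def Bk_def by simp
      have "phi p w k 0 < phi p w \<alpha> 0"
        using phi_less_iff[of p \<alpha> k 0 w] pa pk Lk[of 0] Bkn sk_gt to0 mult_neg_pos[of Bk sk] by simp
      moreover have "tstar p w \<alpha> k \<in> {0<..<sum p J}" using sk_gt to0 ske te_ta te_le
        unfolding sk_def by simp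
      moreover have "t\<alpha> \<in> {tstar p w \<alpha> k ..< tstar p w \<alpha> k + p k}" using ske tc unfolding sk_def by simp
      ultimately have "t\<alpha> \<in> banned J p w \<alpha>" unfolding banned_def
        apply -
        apply (rule UN_I[of k])
        using kJ tdk by auto
      then show False using ta_nb by simp
    qed
  qed
  have K1: "\<And>t. to \<le> t \<Longrightarrow> t \<le> t\<alpha> \<Longrightarrow> phi p w k t \<le> phi p w \<alpha> t"
  proof -
    fix t assume t: "to \<le> t" "t \<le> t\<alpha>"
    have "0 \<le> LL p w \<alpha> k t"
    proof (cases "Bk < 0")
      case True
      have Lk: "LL p w \<alpha> k t = Bk * (t - sk)" using LL_tstar True unfolding Bk_def sk_def
        by (metis less_irrefl)
      have "t - sk < 0" using K2[OF True] t by linarith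
      then have "0 < Bk * (t - sk)" using True mult_neg_neg by blast
      then show ?thesis using Lk by linarith
    next
      case False
      have "LL p w \<alpha> k t = LL p w \<alpha> k to + Bk * (t - to)"
        using LL_lin[of p w \<alpha> k t] LL_lin[of p w \<alpha> k to] unfolding Bk_def by (simp add: algebra_simps)
      moreover have "0 \<le> Bk * (t - to)" using False t by simp
      ultimately show ?thesis using Fk by linarith
    qed
    then show "phi p w k t \<le> phi p w \<alpha> t" using phi_le_iff[of p \<alpha> k t w] pa pk to0 t by simp
  qed
  have dist: "distinct \<sigma>" and setS: "set \<sigma> = J'" using sched unfolding is_partial_schedule_def by auto
  have pnn: "\<forall>x\<in>set \<sigma>. p x \<ge> 0" using setS sub pos_p by (auto intro: less_imp_le)
  define tj where "tj = start_time p \<sigma> to j"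
  define tk where "tk = start_time p \<sigma> to k"
  have sja: "tj + p j \<le> t\<alpha>" using start_before[OF dist pnn j_before, of to] start_a tj_def by simp
  have sak: "t\<alpha> + p \<alpha> \<le> tk" using start_before[OF dist pnn k_after, of to] start_a tk_def by simp
  have tj0: "to \<le> tj" using start_ge[OF pnn] tj_def by simp
  have nb1: "\<not> before \<sigma> \<alpha> j"
  proof
    assume "before \<sigma> \<alpha> j"
    then have "t\<alpha> + p \<alpha> \<le> tj" using start_before[OF dist pnn, of \<alpha> j to] start_a tj_def by simp
    then show False using sja pa pj by linarith
  qed
  have nb2: "\<not> before \<sigma> k \<alpha>"
  proof
    assume "before \<sigma> k \<alpha>"
    then have "tk + p k \<le> t\<alpha>" using start_before[OF dist pnn, of k \<alpha> to] start_a tk_def by simp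
    then show False using sak pa pk by linarith
  qed
  have nb3: "\<not> before \<sigma> k j"
  proof
    assume "before \<sigma> k j"
    then have "tk + p k \<le> tj" using start_before[OF dist pnn, of k j to] tk_def tj_def by simp
    then show False using sak sja pa pk pj by linarith
  qed
  have ta0: "0 \<le> t\<alpha>" using ta_range to0 by linarith
  have A: "\<not> violates p \<sigma> to \<alpha> j I" if d: "dominates J p w \<alpha> j I" for I
  proof
    assume "violates p \<sigma> to \<alpha> j I"
    then have v: "tj \<in> I" "t\<alpha> - p j \<in> I" unfolding violates_def tj_def start_a by auto
    from dom_cases[OF d pa(1) pj(1) pa(2) pj(2)] show False
    proof (elim disjE exE conjE)
      assume "\<forall>t\<ge>0. phi p w j t \<le> phi p w \<alpha> t"
      then have "phi p w j t\<alpha> \<le> phi p w \<alpha> t\<alpha>" using ta0 by simp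
      moreover have "phi p w \<alpha> t\<alpha> < phi p w j t\<alpha>" using J1 jc pj by simp
      ultimately show False by simp
    next
      fix s assume "I = {0..<s}" "\<forall>t. 0 \<le> t \<and> t < s \<longrightarrow> phi p w j t < phi p w \<alpha> t"
      then have "phi p w j (t\<alpha> - p j) < phi p w \<alpha> (t\<alpha> - p j)" using v by simp
      moreover have "phi p w \<alpha> (t\<alpha> - p j) \<le> phi p w j (t\<alpha> - p j)" using J1' jc by simp
      ultimately show False by simp
    next
      fix s assume "0 < s" "\<forall>t. 0 \<le> t \<and> t < s \<longrightarrow> phi p w \<alpha> t < phi p w j t"
      then have "phi p w \<alpha> 0 < phi p w j 0" by simp
      then show False using J0 by simp
    qed
  qed
  have B: "\<not> violates p \<sigma> to k \<alpha> I" if d: "dominates J p w k \<alpha> I" for I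
  proof
    assume "violates p \<sigma> to k \<alpha> I"
    then have v: "t\<alpha> \<in> I" unfolding violates_def start_a by auto
    from dom_cases[OF d pk(1) pa(1) pk(2) pa(2)] show False
    proof (elim disjE exE conjE)
      assume all: "\<forall>t\<ge>0. phi p w \<alpha> t \<le> phi p w k t"
      have le1: "\<And>t. t \<ge> 0 \<Longrightarrow> LL p w \<alpha> k t \<le> 0"
        using all phi_le_iff[of p k \<alpha> _ w] pa pk LL_swap[of p w k \<alpha>] by fastforce
      have "0 \<le> LL p w \<alpha> k to" using K1[of to] ta_range phi_le_iff[of p \<alpha> k to w] pa pk to0 by simp
      then have z1: "LL p w \<alpha> k to = 0" using le1[OF to0] by simp
      then have "0 \<le> LL p w \<alpha> k te" using tieK by simp
      then have z2: "LL p w \<alpha> k te = 0" using le1[of te] to0 te_gt by simp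
      have "p \<alpha> = p k \<and> w \<alpha> = w k" using LL_two_zero[OF pa(1) pk(1) pa(2) pk(2) z1 z2] te_gt by simp
      then show False using d unfolding dominates_def by simp
    next
      fix s assume "I = {0..<s}" "\<forall>t. 0 \<le> t \<and> t < s \<longrightarrow> phi p w \<alpha> t < phi p w k t"
      then have "phi p w \<alpha> t\<alpha> < phi p w k t\<alpha>" using v by simp
      then show False using K1[of t\<alpha>] ta_range by simp
    next
      fix s assume "I = {s..}" "s = tstar p w k \<alpha>" "w k * p \<alpha> - w \<alpha> * p k > 0"
      then have "Bk < 0" "s = sk" unfolding Bk_def sk_def using tstar_sym[of p w k \<alpha>] by auto
      then show False using K2 v \<open>I = {s..}\<close> by simp
    qed
  qed
  have C: "\<not> violates p \<sigma> to k j I" if d: "dominates J p w k j I" for I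
  proof
    assume "violates p \<sigma> to k j I"
    then have v: "tj \<in> I" "tk - p j \<in> I" unfolding violates_def tj_def tk_def by auto
    have x1: "phi p w k (t\<alpha> - p j) \<le> phi p w j (t\<alpha> - p j)"
      using K1[of "t\<alpha> - p j"] J1'[of "t\<alpha> - p j"] jc sj_gt pj by force
    have x2: "phi p w k t\<alpha> < phi p w j t\<alpha>"
      using K1[of "t\<alpha>"] J1[of "t\<alpha>"] jc sj_gt pj ta_range by force
    from dom_cases[OF d pk(1) pj(1) pk(2) pj(2)] show False
    proof (elim disjE exE conjE)
      assume "\<forall>t\<ge>0. phi p w j t \<le> phi p w k t"
      then show False using x2 ta0 by force
    next
      fix s assume I: "I = {0..<s}" "\<forall>t. 0 \<le> t \<and> t < s \<longrightarrow> phi p w j t < phi p w k t"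
      have "t\<alpha> - p j < s" using v I sak pa by simp
      moreover have "0 \<le> t\<alpha> - p j" using jc sj_gt to0 by simp
      ultimately have "phi p w j (t\<alpha> - p j) < phi p w k (t\<alpha> - p j)" using I by simp
      then show False using x1 by simp
    next
      fix s assume I: "I = {s..}" "\<forall>t\<ge>s. phi p w j t \<le> phi p w k t"
      have "s \<le> t\<alpha>" using v I sja pj by simp
      then show False using I x2 by force
    qed
  qed
  have nd: "\<And>x I. \<not> dominates J p w x x I" unfolding dominates_def by simp
  show ?thesis
    unfolding violates_def using A B C nb1 nb2 nb3 nd unfolding violates_def by blast
qed

end
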